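(* Let $m\geq 2$ and $H\in\mathbb{R}^{m\times m}$. Let $A\subset\mathbb{R}^m$ be a nonempty set with $A\neq\{0\}$, and let $f:A\to\mathbb{R}$ be defined by $f(x):=x^THx$. Then $f$ is objective if and only if there exist a nonempty set $\Gamma\subset\mathbb{R}_+$ and $\alpha\in\mathbb{R}$ such that $A=\Gamma\cdot S^{m-1}:=\{tx\mid t\in\Gamma,\ x\in S^{m-1}\}$ and $\tfrac12(H+H^T)=\alpha I_m$.
   Context: $\mathbb{R}^m$ carries the usual inner product and Euclidean norm $\|\cdot\|$, and its elements are regarded as $m\times1$ column matrices. $\mathbb{R}_+=[0,\infty)$, $S^{m-1}:=\{x\in\mathbb{R}^m\mid\|x\|=1\}$, and $I_m$ is the $m\times m$ identity matrix. $\mathcal{Q}_m:=\{Q\in\mathbb{R}^{m\times m}\mid Q^TQ=I_m,\ \det Q=1\}$. A subset $A\subset\mathbb{R}^m$ is called objective if $Qy\in A$ for all $y\in A$ and all $Q\in\mathcal{Q}_m$. A function $f:A\to\mathbb{R}$ is called objective if its domain $A$ is objective and $f(Qy)=f(y)$ for all $y\in A$ and all $Q\in\mathcal{Q}_m$. *)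

theory Defs
  imports "HOL-Analysis.Analysis"
begin

definition rotations :: "(real^'n^'n) set" where
  "rotations = {Q. transpose Q ** Q = mat 1 \<and> det Q = 1}"

definition objective_set :: "(real^'n) set \<Rightarrow> bool" where
  "objective_set A \<longleftrightarrow> (\<forall>Q\<in>rotations. \<forall>y\<in>A. Q *v y \<in> A)"

definition objective_fun :: "(real^'n) set \<Rightarrow> (real^'n \<Rightarrow> real) \<Rightarrow> bool" where
  "objective_fun A f \<longleftrightarrow> objective_set A \<and> (\<forall>Q\<in>rotations. \<forall>y\<in>A. f (Q *v y) = f y)"

end

theory Submission
  imports Defs
begin

lemma rot_iff: "Q \<in> rotations \<longleftrightarrow> rotation_matrix (Q::real^'n^'n)"
  by (simp add: rotations_def rotation_matrix_def orthogonal_matrix)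

lemma rot_norm:
  assumes "Q \<in> rotations" shows "norm (Q *v x) = norm (x::real^'n)"
proof -
  have "orthogonal_matrix Q" using assms by (simp add: rot_iff rotation_matrix_def)
  then have "orthogonal_transformation ((*v) Q)"
    by (simp add: orthogonal_transformation_matrix matrix_of_matrix_vector_mul)
  then show ?thesis by (simp add: orthogonal_transformation)
qed

lemma rot_exists:
  fixes a b :: "real^'n"
  assumes "2 \<le> CARD('n)" "norm a = norm b"
  shows "\<exists>Q\<in>rotations. Q *v a = b"
proof -
  obtain f where f: "orthogonal_transformation f" "det (matrix f) = 1" "f a = b"
    using rotation_exists[OF assms] by metis
  have lf: "linear f" using f(1) by (simp add: orthogonal_transformation)
  have "matrix f *v a = b" using f(3) matrix_works[of f a] lf by simp
  moreover have "orthogonal_matrix (matrix f)"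
    using f(1) orthogonal_transformation_matrix by blast
  then have "matrix f \<in> rotations"
    using f(2) by (simp add: rot_iff rotation_matrix_def)
  ultimately show ?thesis by blast
qed

lemma entry: "axis i 1 \<bullet> (H *v axis j 1) = (H::real^'n^'n) $ i $ j"
  by (simp add: matrix_vector_mult_basis inner_axis' column_def)

lemma scaleR_mv: "((c::real) *\<^sub>R M) *v x = c *\<^sub>R (M *v (x::real^'n))"
  by (simp add: matrix_vector_mult_def vec_eq_iff sum_distrib_left mult.assoc)

lemma quad_sym: "x \<bullet> (H *v x) = x \<bullet> (((1/2) *\<^sub>R (H + transpose H)) *v (x::real^'n))"
proof -
  have "x \<bullet> (transpose H *v x) = x \<bullet> (H *v x)"
    by (simp add: dot_lmul_matrix[symmetric] inner_commute)
  then show ?thesis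
    by (simp add: matrix_vector_mult_add_rdistrib scaleR_mv inner_add_right)
qed

lemma quad_scale: "(t *\<^sub>R x) \<bullet> (S *v (t *\<^sub>R x)) = t^2 * (x \<bullet> (S *v (x::real^'n)))"
  by (simp add: matrix_vector_mult_scaleR power2_eq_square)

lemma quad_add: "(a + b) \<bullet> (S *v (a + b)) =
   a \<bullet> (S *v a) + b \<bullet> (S *v b) + a \<bullet> (S *v b) + b \<bullet> (S *v (a::real^'n))"
  by (simp add: matrix_vector_right_distrib inner_add_left inner_add_right)

lemma sphere_const:
  fixes S :: "real^'n^'n"
  assumes sym: "\<And>i j. S $ i $ j = S $ j $ i" and r: "r > 0"
    and c: "\<And>x. norm x = r \<Longrightarrow> x \<bullet> (S *v x) = c"
  shows "S = (c / r^2) *\<^sub>R mat 1"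
proof -
  have diag: "S $ i $ i = c / r^2" for i
  proof -
    have "norm (r *\<^sub>R axis i (1::real)) = r" using r by simp
    then have "(r *\<^sub>R axis i 1) \<bullet> (S *v (r *\<^sub>R axis i 1)) = c" by (rule c)
    then have "r^2 * S $ i $ i = c" by (simp only: quad_scale entry)
    then show ?thesis using r by (simp add: field_simps)
  qed
  have off: "S $ i $ j = 0" if "i \<noteq> j" for i j
  proof -
    let ?v = "axis i (1::real) + axis j 1"
    have nv: "norm ?v = sqrt 2"
      using that by (simp add: norm_eq_sqrt_inner inner_add_left inner_add_right inner_axis_axis)
    let ?x = "(r / sqrt 2) *\<^sub>R ?v"
    have "norm ?x = r" using r nv by simp
    then have "?x \<bullet> (S *v ?x) = c" by (rule c)
    then have "(r / sqrt 2)^2 * (?v \<bullet> (S *v ?v)) = c" by (simp only: quad_scale)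
    moreover have "?v \<bullet> (S *v ?v) = S$i$i + S$j$j + S$i$j + S$j$i"
      by (simp only: quad_add entry)
    ultimately have "r^2 / 2 * (2 * (c / r^2) + 2 * S$i$j) = c"
      using diag sym[of i j] by (simp add: power_divide add.commute)
    then have "c + r^2 * S$i$j = c" using r by (simp add: field_simps)
    then show ?thesis using r by simp
  qed
  show ?thesis
    by (simp add: vec_eq_iff mat_def diag off)
qed

theorem corollary2:
  fixes H :: "real^'n^'n" and A :: "(real^'n) set"
  assumes "CARD('n) \<ge> 2"
    and "A \<noteq> {}" and "A \<noteq> {0}"
  shows "objective_fun A (\<lambda>x. x \<bullet> (H *v x)) \<longleftrightarrow>
    (\<exists>\<Gamma> :: real set. \<exists>\<alpha> :: real. \<Gamma> \<noteq> {} \<and> \<Gamma> \<subseteq> {0..} \<and>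
       A = {t *\<^sub>R x | t x. t \<in> \<Gamma> \<and> norm x = 1} \<and>
       (1/2) *\<^sub>R (H + transpose H) = \<alpha> *\<^sub>R mat 1)"
proof
  assume obj: "objective_fun A (\<lambda>x. x \<bullet> (H *v x))"
  then have inv: "\<And>Q y. Q \<in> rotations \<Longrightarrow> y \<in> A \<Longrightarrow> Q *v y \<in> A"
    and fi: "\<And>Q y. Q \<in> rotations \<Longrightarrow> y \<in> A \<Longrightarrow> (Q *v y) \<bullet> (H *v (Q *v y)) = y \<bullet> (H *v y)"
    by (auto simp: objective_fun_def objective_set_def)
  have reach: "x \<in> A" if h: "y \<in> A" "norm x = norm y" for x y
  proof -
    obtain Q where "Q \<in> rotations" "Q *v y = x" using rot_exists[OF assms(1) h(2)[symmetric]] by blast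
    then show ?thesis using inv h(1) by blast
  qed
  have fval: "x \<bullet> (H *v x) = y \<bullet> (H *v y)" if h: "y \<in> A" "norm x = norm y" for x y
  proof -
    obtain Q where "Q \<in> rotations" "Q *v y = x" using rot_exists[OF assms(1) h(2)[symmetric]] by blast
    then show ?thesis using fi h(1) by blast
  qed
  obtain k :: 'n where True by simp
  have AG: "A = {t *\<^sub>R x | t x. t \<in> norm ` A \<and> norm x = 1}"
  proof
    show "A \<subseteq> {t *\<^sub>R x | t x. t \<in> norm ` A \<and> norm x = 1}"
    proof
      fix y assume y: "y \<in> A"
      show "y \<in> {t *\<^sub>R x | t x. t \<in> norm ` A \<and> norm x = 1}"
      proof (cases "y = 0")
        case True
        then show ?thesis using y
          by (intro CollectI exI[of _ "norm y"] exI[of _ "axis k 1"]) auto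
      next
        case False
        then show ?thesis using y
          by (intro CollectI exI[of _ "norm y"] exI[of _ "y /\<^sub>R norm y"]) auto
      qed
    qed
  next
    show "{t *\<^sub>R x | t x. t \<in> norm ` A \<and> norm x = 1} \<subseteq> A"
      using reach by auto
  qed
  obtain y where y: "y \<in> A" "y \<noteq> 0" using assms(2,3) by blast
  let ?S = "(1/2) *\<^sub>R (H + transpose H)"
  have "?S = ((y \<bullet> (H *v y)) / (norm y)^2) *\<^sub>R mat 1"
  proof (rule sphere_const)
    show "?S $ i $ j = ?S $ j $ i" for i j by (simp add: transpose_def)
    show "norm y > 0" using y by simp
    show "x \<bullet> (?S *v x) = y \<bullet> (H *v y)" if "norm x = norm y" for x
      using fval[OF y(1) that] quad_sym[of x H] by simp
  qed
  then show "\<exists>\<Gamma> :: real set. \<exists>\<alpha> :: real. \<Gamma> \<noteq> {} \<and> \<Gamma> \<subseteq> {0..} \<and>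
       A = {t *\<^sub>R x | t x. t \<in> \<Gamma> \<and> norm x = 1} \<and>
       (1/2) *\<^sub>R (H + transpose H) = \<alpha> *\<^sub>R mat 1"
    using AG assms(2) by (intro exI[of _ "norm ` A"]) auto
next
  assume "\<exists>\<Gamma> :: real set. \<exists>\<alpha> :: real. \<Gamma> \<noteq> {} \<and> \<Gamma> \<subseteq> {0..} \<and>
       A = {t *\<^sub>R x | t x. t \<in> \<Gamma> \<and> norm x = 1} \<and>
       (1/2) *\<^sub>R (H + transpose H) = \<alpha> *\<^sub>R mat 1"
  then obtain \<Gamma> \<alpha> where A: "A = {t *\<^sub>R x | t x. t \<in> \<Gamma> \<and> norm x = (1::real)}"
    and S: "(1/2) *\<^sub>R (H + transpose H) = \<alpha> *\<^sub>R mat 1" by blast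
  have fq: "x \<bullet> (H *v x) = \<alpha> * (norm x)^2" for x
    using quad_sym[of x H] by (simp add: S scaleR_mv power2_norm_eq_inner)
  have "objective_set A"
    unfolding objective_set_def
  proof (intro ballI)
    fix Q :: "real^'n^'n" and y assume Q: "Q \<in> rotations" and y: "y \<in> A"
    then obtain t x where tx: "y = t *\<^sub>R x" "t \<in> \<Gamma>" "norm x = 1" using A by blast
    have "Q *v y = t *\<^sub>R (Q *v x)" using tx by (simp add: matrix_vector_mult_scaleR)
    moreover have "norm (Q *v x) = 1" using rot_norm[OF Q] tx by simp
    ultimately show "Q *v y \<in> A" using tx A by blast
  qed
  then show "objective_fun A (\<lambda>x. x \<bullet> (H *v x))"
    unfolding objective_fun_def using fq rot_norm by auto
qed

end
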